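(* Let $q\geq 2$ be an integer and $u_0,r$ positive integers with $\gcd(u_0+r,q)=1$. Define $u_n=u_0+r[n]_q$ for $n\ge1$, where $[n]_q=\frac{q^n-1}{q-1}$. Then for all positive integers $n,m$ with $m\leq\lfloor n/2\rfloor$, \[\mathrm{lcm}(u_m,u_{m+1},\dots,u_n)\geq \gcd(u_0,r)\left(\frac{r}{\gcd(u_0,r)}\right)^{\frac n2+1}q^{\frac{n(n-2)}{4}}.\] *)

theory Defs
  imports Complex_Main
begin

text \<open>The q-integer [n]_q = (q^n - 1)/(q - 1) = 1 + q + ... + q^(n-1) (exact division for q >= 2).\<close>
definition qint :: "nat \<Rightarrow> nat \<Rightarrow> nat" where
  "qint q n = (q ^ n - 1) div (q - 1)"

definition useq :: "nat \<Rightarrow> nat \<Rightarrow> nat \<Rightarrow> nat \<Rightarrow> nat" where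
  "useq q u0 r n = u0 + r * qint q n"

end

theory Submission imports Defs "HOL-Computational_Algebra.Primes" begin

lemma mult_card:
  fixes p y :: nat
  assumes "prime p" "y > 0" "B \<ge> multiplicity p y"
  shows "card {e\<in>{1..B}. p ^ e dvd y} = multiplicity p y"
proof -
  have "{e\<in>{1..B}. p ^ e dvd y} = {1..multiplicity p y}"
  proof -
    have "p \<noteq> 1" using assms(1) by auto
    then have pd: "\<And>n. p ^ n dvd y \<longleftrightarrow> n \<le> multiplicity p y"
      using assms power_dvd_iff_le_multiplicity[of y p] by simp
    show ?thesis using assms by (auto simp: pd)
  qed
  then show ?thesis by simp
qed

lemma mult_card_le:
  fixes p y :: nat
  assumes "prime p" "y > 0"
  shows "card {e\<in>{1..B}. p ^ e dvd y} \<le> multiplicity p y"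
proof -
  have "{e\<in>{1..B}. p ^ e dvd y} \<subseteq> {1..multiplicity p y}"
  proof -
    have "p \<noteq> 1" using assms(1) by auto
    then have pd: "\<And>n. p ^ n dvd y \<longleftrightarrow> n \<le> multiplicity p y"
      using assms power_dvd_iff_le_multiplicity[of y p] by simp
    show ?thesis using assms by (auto simp: pd)
  qed
  then show ?thesis by (metis card_atLeastAtMost card_mono diff_Suc_1 finite_atLeastAtMost)
qed

lemma card_swap:
  fixes P :: "'a \<Rightarrow> 'b \<Rightarrow> bool"
  assumes "finite A" "finite E"
  shows "(\<Sum>k\<in>A. card {e\<in>E. P e k}) = (\<Sum>e\<in>E. card {k\<in>A. P e k})"
proof -
  have "(\<Sum>k\<in>A. card {e\<in>E. P e k}) = (\<Sum>k\<in>A. \<Sum>e\<in>E. if P e k then 1 else 0)"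
    using assms by (simp add: sum.If_cases Int_def)
  also have "\<dots> = (\<Sum>e\<in>E. \<Sum>k\<in>A. if P e k then 1 else 0)" by (rule sum.swap)
  also have "\<dots> = (\<Sum>e\<in>E. card {k\<in>A. P e k})"
    using assms by (simp add: sum.If_cases Int_def)
  finally show ?thesis .
qed

lemma card_step:
  fixes x c :: "nat \<Rightarrow> nat"
  assumes H: "\<And>j k. j \<in> {m..n} \<Longrightarrow> k \<in> {m..n} \<Longrightarrow> j < k \<Longrightarrow> d dvd x j \<Longrightarrow> d dvd x k \<Longrightarrow> d dvd c (k - j)"
  shows "card {k\<in>{m..n}. d dvd x k} \<le> (if (\<exists>k\<in>{m..n}. d dvd x k) then 1 else 0) + card {t\<in>{1..n-m}. d dvd c t}"
proof (cases "\<exists>k\<in>{m..n}. d dvd x k")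
  case False
  then have "{k\<in>{m..n}. d dvd x k} = {}" by auto
  then show ?thesis by (simp only:) simp
next
  case True
  define S where "S = {k\<in>{m..n}. d dvd x k}"
  define T where "T = {t\<in>{1..n-m}. d dvd c t}"
  have fS: "finite S" "S \<noteq> {}" using True by (auto simp: S_def)
  define k0 where "k0 = Min S"
  have k0: "k0 \<in> S" using fS by (simp add: k0_def)
  have "S \<subseteq> insert k0 ((\<lambda>t. t + k0) ` T)"
  proof
    fix k assume k: "k \<in> S"
    show "k \<in> insert k0 ((\<lambda>t. t + k0) ` T)"
    proof (cases "k = k0")
      case False
      then have "k0 < k" using k fS k0_def by (metis Min_le order_le_neq_trans)
      then have "d dvd c (k - k0)" using H[of k0 k] k k0 by (auto simp: S_def)
      then have "k - k0 \<in> T" using \<open>k0 < k\<close> k k0 by (auto simp: S_def T_def)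
      then show ?thesis using \<open>k0 < k\<close> by (auto intro!: image_eqI[of _ _ "k - k0"])
    qed simp
  qed
  then have "card S \<le> card (insert k0 ((\<lambda>t. t + k0) ` T))"
    by (rule card_mono[rotated]) (simp add: T_def)
  also have "\<dots> \<le> 1 + card T"
  proof -
    have "card (insert k0 ((\<lambda>t. t + k0) ` T)) \<le> Suc (card ((\<lambda>t. t + k0) ` T))"
      by (simp add: card_insert_le_m1 T_def)
    moreover have "card ((\<lambda>t. t + k0) ` T) \<le> card T" by (simp add: card_image_le T_def)
    ultimately show ?thesis by simp
  qed
  finally show ?thesis using True by (simp add: S_def T_def)
qed

lemma prod_dvd_lcm:
  fixes x c :: "nat \<Rightarrow> nat"
  assumes xpos: "\<And>k. k \<in> {m..n} \<Longrightarrow> x k > 0"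
    and cpos: "\<And>t. t \<in> {1..n-m} \<Longrightarrow> c t > 0"
    and H: "\<And>p e j k. prime p \<Longrightarrow> j \<in> {m..n} \<Longrightarrow> k \<in> {m..n} \<Longrightarrow> j < k \<Longrightarrow>
              p ^ e dvd x j \<Longrightarrow> p ^ e dvd x k \<Longrightarrow> p ^ e dvd c (k - j)"
  shows "(\<Prod>k\<in>{m..n}. x k) dvd Lcm (x ` {m..n}) * (\<Prod>t\<in>{1..n-m}. c t)"
proof (rule multiplicity_le_imp_dvd)
  define P where "P = (\<Prod>k\<in>{m..n}. x k)"
  define L where "L = Lcm (x ` {m..n})"
  define C where "C = (\<Prod>t\<in>{1..n-m}. c t)"
  have x0: "0 \<notin> x ` {m..n}"
  proof
    assume "0 \<in> x ` {m..n}"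
    then obtain k where "k \<in> {m..n}" "0 = x k" by blast
    then show False using xpos[of k] by simp
  qed
  have P0: "P \<noteq> 0" using x0 by (auto simp: P_def)
  then show "(\<Prod>k\<in>{m..n}. x k) \<noteq> 0" by (simp add: P_def)
  have L0: "L \<noteq> 0" unfolding L_def using x0 by (subst Lcm_0_iff) auto
  have C0: "C \<noteq> 0" using cpos by (auto simp: C_def)
  fix p :: nat assume p: "prime p"
  define B where "B = multiplicity p P"
  have "multiplicity p P = (\<Sum>k\<in>{m..n}. multiplicity p (x k))"
    unfolding P_def using p x0
    by (intro prime_elem_multiplicity_prod_distrib) auto
  also have "\<dots> = (\<Sum>k\<in>{m..n}. card {e\<in>{1..B}. p ^ e dvd x k})"
  proof (rule sum.cong[OF refl])
    fix k assume k: "k \<in> {m..n}"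
    have "x k dvd P" unfolding P_def using k by (intro dvd_prodI) auto
    then have "multiplicity p (x k) \<le> B" unfolding B_def using P0 by (rule dvd_imp_multiplicity_le)
    then show "multiplicity p (x k) = card {e\<in>{1..B}. p ^ e dvd x k}"
      using mult_card[OF p xpos[OF k]] by simp
  qed
  also have "\<dots> = (\<Sum>e\<in>{1..B}. card {k\<in>{m..n}. p ^ e dvd x k})"
    by (rule card_swap) auto
  also have "\<dots> \<le> (\<Sum>e\<in>{1..B}. (if (\<exists>k\<in>{m..n}. p ^ e dvd x k) then 1 else 0)
                 + card {t\<in>{1..n-m}. p ^ e dvd c t})"
    by (intro sum_mono card_step H[OF p])
  also have "\<dots> = card {e\<in>{1..B}. \<exists>k\<in>{m..n}. p ^ e dvd x k}
                 + (\<Sum>t\<in>{1..n-m}. card {e\<in>{1..B}. p ^ e dvd c t})"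
  proof -
    have "(\<Sum>e\<in>{1..B}. (if (\<exists>k\<in>{m..n}. p ^ e dvd x k) then 1 else 0) :: nat)
          = card {e\<in>{1..B}. \<exists>k\<in>{m..n}. p ^ e dvd x k}"
      by (simp add: sum.If_cases Int_def)
    moreover have "(\<Sum>e\<in>{1..B}. card {t\<in>{1..n-m}. p ^ e dvd c t})
          = (\<Sum>t\<in>{1..n-m}. card {e\<in>{1..B}. p ^ e dvd c t})"
      by (rule card_swap[symmetric]) auto
    ultimately show ?thesis by (simp add: sum.distrib)
  qed
  also have "\<dots> \<le> multiplicity p L + (\<Sum>t\<in>{1..n-m}. multiplicity p (c t))"
  proof (intro add_mono sum_mono)
    have "{e\<in>{1..B}. \<exists>k\<in>{m..n}. p ^ e dvd x k} \<subseteq> {e\<in>{1..B}. p ^ e dvd L}"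
      unfolding L_def by (auto intro: dvd_trans dvd_Lcm)
    then have "card {e\<in>{1..B}. \<exists>k\<in>{m..n}. p ^ e dvd x k} \<le> card {e\<in>{1..B}. p ^ e dvd L}"
      by (intro card_mono) auto
    also have "\<dots> \<le> multiplicity p L" using mult_card_le[OF p] L0 by simp
    finally show "card {e\<in>{1..B}. \<exists>k\<in>{m..n}. p ^ e dvd x k} \<le> multiplicity p L" .
  next
    fix t assume "t \<in> {1..n-m}"
    then show "card {e\<in>{1..B}. p ^ e dvd c t} \<le> multiplicity p (c t)"
      using mult_card_le[OF p cpos] by simp
  qed
  also have "(\<Sum>t\<in>{1..n-m}. multiplicity p (c t)) = multiplicity p C"
  proof -
    have "0 \<notin> c ` {1..n-m}"
    proof
      assume "0 \<in> c ` {1..n-m}"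
      then obtain k where "k \<in> {1..n-m}" "0 = c k" by blast
      then show False using cpos[of k] by simp
    qed
    then show ?thesis unfolding C_def using p
      by (intro prime_elem_multiplicity_prod_distrib[symmetric]) auto
  qed
  also have "multiplicity p L + multiplicity p C = multiplicity p (L * C)"
    using p L0 C0 by (simp add: prime_elem_multiplicity_mult_distrib)
  finally show "multiplicity p (\<Prod>k\<in>{m..n}. x k) \<le> multiplicity p (Lcm (x ` {m..n}) * (\<Prod>t\<in>{1..n-m}. c t))"
    by (simp add: P_def L_def C_def)
qed


lemma qint_Suc:
  assumes "q \<ge> 2"
  shows "qint q (Suc n) = qint q n + q ^ n"
proof -
  have key: "(q - 1) * (\<Sum>i<k. q ^ i) = q ^ k - 1" for k
  proof (induction k)
    case (Suc k)
    have "q ^ k \<ge> 1" using assms by simp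
    have "(q - 1) * (\<Sum>i<Suc k. q ^ i) = (q ^ k - 1) + (q - 1) * q ^ k"
      using Suc by (simp add: algebra_simps)
    also have "\<dots> = q ^ Suc k - 1"
      using assms \<open>q ^ k \<ge> 1\<close> by (simp add: algebra_simps diff_mult_distrib)
    finally show ?case .
  qed simp
  have qs: "qint q k = (\<Sum>i<k. q ^ i)" for k
    unfolding qint_def key[of k, symmetric] using assms by simp
  show ?thesis by (simp add: qs)
qed

lemma qint_0: "qint q 0 = 0" by (simp add: qint_def)

lemma qint_add:
  assumes "q \<ge> 2"
  shows "qint q (s + t) = qint q s + q ^ s * qint q t"
  by (induction t) (simp_all add: qint_0 qint_Suc[OF assms] algebra_simps power_add)

lemma qint_ge:
  assumes "q \<ge> 2" "k \<ge> 1"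
  shows "qint q k \<ge> q ^ (k - 1)"
  using assms(2) qint_Suc[OF assms(1), of "k - 1"] by simp

lemma prod_shift:
  fixes f :: "nat \<Rightarrow> nat"
  assumes "m \<le> n"
  shows "(\<Prod>k\<in>{m..n}. f k) = f m * (\<Prod>t\<in>{1..n-m}. f (m + t))"
proof -
  have "{m..n} = (\<lambda>t. m + t) ` {0..n-m}" using assms
    by (auto simp: image_iff intro!: bexI[of _ "x - m" for x])
  moreover have "prod f ((\<lambda>t. m + t) ` {0..n-m}) = (\<Prod>t\<in>{0..n-m}. f (m + t))"
    by (subst prod.reindex) (auto simp: inj_on_def)
  ultimately have "(\<Prod>k\<in>{m..n}. f k) = (\<Prod>t\<in>{0..n-m}. f (m + t))"
    by simp
  also have "\<dots> = f m * (\<Prod>t\<in>{1..n-m}. f (m + t))"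
    by (subst prod.atLeast_Suc_atMost) auto
  finally show ?thesis .
qed


theorem theorem4:
  fixes q u0 r n m :: nat
  assumes "q \<ge> 2" and "u0 > 0" and "r > 0" and "coprime (u0 + r) q"
    and "n > 0" and "m > 0" and "m \<le> n div 2"
  shows "real (Lcm (useq q u0 r ` {m..n})) \<ge>
           real (gcd u0 r) * (real r / real (gcd u0 r)) powr (real n / 2 + 1)
             * real q powr (real n * (real n - 2) / 4)"
proof -
  note q2 = assms(1)
  define d where "d = gcd u0 r"
  define a where "a = u0 div d"
  define b where "b = r div d"
  define h where "h = n div 2"
  define v where "v = (\<lambda>k. a + b * qint q k)"
  have d0: "d > 0" using assms(2) by (simp add: d_def)
  have u0a: "u0 = d * a" and rb: "r = d * b" by (simp_all add: d_def a_def b_def)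
  have b0: "b > 0" using assms(3) rb by (cases b) auto
  have cop: "coprime a b" unfolding a_def b_def d_def using assms(2)
    by (intro div_gcd_coprime) auto
  have uv: "useq q u0 r k = d * v k" for k
    by (simp add: useq_def v_def u0a rb algebra_simps)
  have h1: "h \<ge> 1" using assms(6,7) h_def by simp
  have hm: "m \<le> h" using assms(7) h_def by simp
  have hn: "h \<le> n" using h_def by simp
  have vpos: "v k > 0" if "k \<ge> 1" for k
  proof -
    have "0 < q ^ (k - 1)" using q2 by simp
    then have "0 < qint q k" using qint_ge[OF q2 that] by linarith
    then show ?thesis using b0 by (simp add: v_def)
  qed
  have qpos: "qint q t > 0" if "t \<ge> 1" for t
  proof -
    have "0 < q ^ (t - 1)" using q2 by simp
    then show ?thesis using qint_ge[OF q2 that] by linarith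
  qed
  have H: "p ^ e dvd qint q (k - j)"
    if p: "prime p" and j: "j \<in> {h..n}" and k: "k \<in> {h..n}" and jk: "j < k"
      and dj: "p ^ e dvd v j" and dk: "p ^ e dvd v k" for p e j k
  proof (cases "e = 0")
    case True then show ?thesis by simp
  next
    case False
    have j1: "j \<ge> 1" using j h1 by simp
    have pvj: "p dvd v j" using dj False by (meson dvd_power dvd_trans neq0_conv)
    have vk: "v k = v j + b * q ^ j * qint q (k - j)"
      using qint_add[OF q2, of j "k - j"] jk by (simp add: v_def algebra_simps)
    have "p ^ e dvd b * q ^ j * qint q (k - j)"
      using dj dk vk by (metis dvd_add_right_iff)
    have pb: "\<not> p dvd b"
    proof
      assume "p dvd b"
      then have "p dvd a" using pvj by (simp add: v_def dvd_add_left_iff)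
      then show False using \<open>p dvd b\<close> cop p
        by (metis coprime_common_divisor not_prime_unit)
    qed
    have pq: "\<not> p dvd q"
    proof
      assume "p dvd q"
      have "qint q j = 1 + q * qint q (j - 1)"
        using qint_add[OF q2, of 1 "j - 1"] j1 by (simp add: qint_Suc[OF q2] qint_0)
      then have "useq q u0 r j = (u0 + r) + q * (r * qint q (j - 1))"
        by (simp add: useq_def algebra_simps)
      moreover have "p dvd useq q u0 r j" using uv pvj by simp
      ultimately have "p dvd u0 + r" using \<open>p dvd q\<close> by (metis dvd_add_left_iff dvd_mult2)
      then show False using \<open>p dvd q\<close> assms(4) p
        by (metis coprime_common_divisor not_prime_unit)
    qed
    have "coprime p (b * q ^ j)" using pb pq p
      by (simp add: prime_imp_coprime)
    then have "coprime (p ^ e) (b * q ^ j)" by auto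
    then show ?thesis using \<open>p ^ e dvd b * q ^ j * qint q (k - j)\<close>
      by (simp add: coprime_dvd_mult_right_iff mult.assoc)
  qed
  define N where "N = n - h"
  define Lv where "Lv = Lcm (v ` {h..n})"
  define Cq where "Cq = (\<Prod>t\<in>{1..N}. qint q t)"
  have dv: "(\<Prod>k\<in>{h..n}. v k) dvd Lv * Cq"
    unfolding Lv_def Cq_def N_def
    by (rule prod_dvd_lcm) (use vpos qpos h1 H in auto)
  have Cq0: "Cq > 0" unfolding Cq_def using qpos by (simp add: prod_pos)
  have Lv0: "Lv > 0"
  proof -
    have "0 \<notin> v ` {h..n}" using vpos h1 by (auto, metis less_irrefl order_trans)
    then show ?thesis unfolding Lv_def by (subst neq0_conv[symmetric], subst Lcm_0_iff) auto
  qed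
  have le1: "(\<Prod>k\<in>{h..n}. v k) \<le> Lv * Cq"
    using dv Lv0 Cq0 by (simp add: dvd_imp_le)
  have "(\<Prod>k\<in>{h..n}. b * qint q k) \<le> (\<Prod>k\<in>{h..n}. v k)"
    by (intro prod_mono) (simp add: v_def)
  also have "(\<Prod>k\<in>{h..n}. b * qint q k) = b * qint q h * (\<Prod>t\<in>{1..N}. b * qint q (h + t))"
    unfolding N_def by (rule prod_shift[OF hn])
  finally have le2: "b * qint q h * (\<Prod>t\<in>{1..N}. b * qint q (h + t)) \<le> Lv * Cq" using le1 by simp
  have "(\<Prod>t\<in>{1..N}. b * (q ^ h * qint q t)) \<le> (\<Prod>t\<in>{1..N}. b * qint q (h + t))"
    by (intro prod_mono) (simp add: qint_add[OF q2])
  also have "(\<Prod>t\<in>{1..N}. b * (q ^ h * qint q t)) = b ^ N * q ^ (h * N) * Cq"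
    by (simp add: Cq_def prod.distrib power_mult)
  finally have "b * qint q h * (b ^ N * q ^ (h * N) * Cq) \<le> Lv * Cq"
    using le2 by (meson mult_le_mono2 order_trans)
  moreover have "b * q ^ (h - 1) * (b ^ N * q ^ (h * N)) \<le> b * qint q h * (b ^ N * q ^ (h * N))"
    using qint_ge[OF q2 h1] by simp
  ultimately have "b * q ^ (h - 1) * (b ^ N * q ^ (h * N)) * Cq \<le> Lv * Cq"
    by (metis mult.assoc mult_le_mono1 order_trans)
  then have keyLv: "b ^ (N + 1) * q ^ (h - 1 + h * N) \<le> Lv"
    using Cq0 by (simp add: power_add algebra_simps)
  have "useq q u0 r ` {h..n} = (*) d ` (v ` {h..n})" by (auto simp: uv)
  then have "Lcm (useq q u0 r ` {h..n}) = d * Lv"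
    unfolding Lv_def using hn by (simp add: Lcm_mult)
  moreover have "Lcm (useq q u0 r ` {h..n}) dvd Lcm (useq q u0 r ` {m..n})"
    using hm by (intro Lcm_subset image_mono) auto
  moreover have "Lcm (useq q u0 r ` {m..n}) \<noteq> 0"
  proof -
    have "0 \<notin> useq q u0 r ` {m..n}" using assms(2) by (auto simp: useq_def)
    then show ?thesis by (simp add: Lcm_0_iff)
  qed
  ultimately have "d * Lv \<le> Lcm (useq q u0 r ` {m..n})"
    by (metis dvd_imp_le neq0_conv)
  then have fin: "real d * (real b ^ (N + 1) * real q ^ (h - 1 + h * N)) \<le> real (Lcm (useq q u0 r ` {m..n}))"
    using keyLv d0 by (metis (mono_tags, lifting) le_trans mult_le_mono2 of_nat_le_iff of_nat_mult of_nat_power)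
  have rd: "real r / real (gcd u0 r) = real b"
  proof -
    have "real r = real d * real b" using rb by simp
    then show ?thesis using d0 unfolding d_def[symmetric] by (simp add: field_simps)
  qed
  have e1: "real n / 2 + 1 \<le> real (N + 1)"
    unfolding N_def h_def by linarith
  have e2: "real n * (real n - 2) / 4 \<le> real (h - 1 + h * N)"
  proof -
    have "n = 2 * h \<or> n = 2 * h + 1" unfolding h_def by linarith
    then show ?thesis using h1 unfolding N_def
      by (auto simp: of_nat_diff field_simps)
  qed
  have b1: "real b \<ge> 1" using b0 by simp
  have q1: "real q \<ge> 1" using q2 by simp
  have "real b powr (real n / 2 + 1) \<le> real b ^ (N + 1)"
  proof -
    have "real b ^ (N + 1) = real b powr real (N + 1)" using b0 by (simp only: powr_realpow of_nat_0_less_iff)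
    then show ?thesis using powr_mono[OF e1 b1] by simp
  qed
  moreover have "real q powr (real n * (real n - 2) / 4) \<le> real q ^ (h - 1 + h * N)"
  proof -
    have "real q ^ (h - 1 + h * N) = real q powr real (h - 1 + h * N)" using q2 by (intro powr_realpow[symmetric]) simp
    then show ?thesis using powr_mono[OF e2 q1] by simp
  qed
  ultimately have "real d * (real b powr (real n / 2 + 1) * real q powr (real n * (real n - 2) / 4))
      \<le> real d * (real b ^ (N + 1) * real q ^ (h - 1 + h * N))"
    by (intro mult_left_mono mult_mono) auto
  then show ?thesis using fin rd d_def by (simp add: mult.assoc)
qed

end
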